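(* Let $d\ge1$ and $k\ge d+2$ be integers. Let $\pi_1,\dots,\pi_k>0$ with $\sum_{i=1}^k\pi_i=1$, let $\mu_1,\dots,\mu_k\in\mathbb{R}^d$, and let \[\rho(x)=\sum_{i=1}^k \frac{\pi_i}{\sqrt{(2\pi)^d}}\,e^{-\frac12\|x-\mu_i\|^2},\qquad x\in\mathbb{R}^d.\] Assume that the distances $\|\mu_i-\mu_j\|$, $1\le i<j\le k$, are pairwise distinct, and that the configuration $(\mu_1,\dots,\mu_k)$ is reconstructible from its multiset of pairwise distances. Then $\rho$ is uniquely reconstructible, up to a rigid motion, from its distribution of distances: if $\bar\pi_1,\dots,\bar\pi_k>0$ with $\sum_i\bar\pi_i=1$, $\nu_1,\dots,\nu_k\in\mathbb{R}^d$, and $\bar\rho(x)=\sum_{i=1}^k\frac{\bar\pi_i}{\sqrt{(2\pi)^d}}e^{-\frac12\|x-\nu_i\|^2}$ has the same distribution of distances as $\rho$, then there exists $g\in E(d)$ with $\rho(x)=\bar\rho(g\cdot x)$ for all $x\in\mathbb{R}^d$.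
   Context: $E(d)$ denotes the Euclidean group of rigid motions of $\mathbb{R}^d$ and $\|\cdot\|$ the Euclidean norm. For a probability density $\rho$ on $\mathbb{R}^d$, its distribution of distances is the probability density $r(\Delta)$ of the random variable $\Delta=\|x_1-x_2\|^2$, where $x_1,x_2$ are drawn independently according to $\rho$. A point configuration $p_1,\dots,p_k\in\mathbb{R}^d$ is called reconstructible from its multiset of pairwise distances if for every configuration $q_1,\dots,q_k\in\mathbb{R}^d$ whose multiset of pairwise distances equals that of $p_1,\dots,p_k$, there exist $g\in E(d)$ and a permutation $\sigma$ of $\{1,\dots,k\}$ with $g\cdot p_{\sigma(i)}=q_i$ for all $i$. *)

theory Defs
  imports "HOL-Probability.Probability" "HOL-Library.Multiset"
begin

definition rigid_motion :: "('a::euclidean_space \<Rightarrow> 'a) \<Rightarrow> bool" where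
  "rigid_motion g \<longleftrightarrow> (\<exists>f b. orthogonal_transformation f \<and> (\<forall>x. g x = f x + b))"

definition gauss_mix :: "nat \<Rightarrow> (nat \<Rightarrow> real) \<Rightarrow> (nat \<Rightarrow> 'a::euclidean_space) \<Rightarrow> 'a \<Rightarrow> real" where
  "gauss_mix k w m x =
     (\<Sum>i<k. w i / sqrt ((2 * pi) ^ DIM('a)) * exp (- (1/2) * (norm (x - m i))\<^sup>2))"

definition dist_distr :: "('a::euclidean_space \<Rightarrow> real) \<Rightarrow> real measure" where
  "dist_distr rho =
     distr (density lborel (\<lambda>x. ennreal (rho x)) \<Otimes>\<^sub>M density lborel (\<lambda>x. ennreal (rho x)))
           borel (\<lambda>(x, y). (norm (x - y))\<^sup>2)"

definition pair_dists :: "nat \<Rightarrow> (nat \<Rightarrow> 'a::euclidean_space) \<Rightarrow> real multiset" where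
  "pair_dists k p = image_mset (\<lambda>(i, j). dist (p i) (p j)) (mset_set {(i, j). i < j \<and> j < k})"

definition reconstructible :: "nat \<Rightarrow> (nat \<Rightarrow> 'a::euclidean_space) \<Rightarrow> bool" where
  "reconstructible k p \<longleftrightarrow>
     (\<forall>q :: nat \<Rightarrow> 'a. pair_dists k q = pair_dists k p \<longrightarrow>
        (\<exists>g \<sigma>. rigid_motion g \<and> bij_betw \<sigma> {..<k} {..<k} \<and> (\<forall>i<k. g (p (\<sigma> i)) = q i)))"

end

theory Submission
  imports Defs
begin

lemma expo_id:
  fixes X Y m :: "'a::real_inner" and t \<beta> s :: real
  assumes h1: "\<beta>*(4*t+1) = 2*t" and h2: "s*(4*t+1) = t"
  shows "(1/2)*(norm X)^2 + (1/2)*(norm Y)^2 + t*(norm (X - Y + m))^2 =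
     s*(norm m)^2 + (1/2)*(norm (X + \<beta> *\<^sub>R m))^2 + (1/2)*(norm (Y - \<beta> *\<^sub>R m))^2
     + t*(norm (X + \<beta> *\<^sub>R m - (Y - \<beta> *\<^sub>R m)))^2"
proof -
  have h3: "t - s - 2*t*\<beta> = 0"
  proof -
    have "(t - s - 2*t*\<beta>)*(4*t+1) = 0" using h1 h2 by algebra
    moreover have "4*t+1 \<noteq> 0 \<or> t = - 1/4" by auto
    ultimately show ?thesis using h1 h2 by auto
  qed
  show ?thesis
    unfolding power2_norm_eq_inner
    by (simp add: inner_add_left inner_add_right inner_diff_left inner_diff_right inner_commute algebra_simps)
       (use h1 h2 h3 in algebra)
qed

definition EE :: "'a::real_normed_vector \<Rightarrow> real" where
  "EE x = exp (-(1/2) * (norm x)^2)"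

lemma EE_measurable[measurable]: "EE \<in> borel_measurable borel"
  unfolding EE_def by measurable

lemma EE_pos: "EE x > 0" unfolding EE_def by simp

lemma EE_nonneg[simp]: "EE x \<ge> 0" using EE_pos[of x] by simp

lemma pointwise:
  fixes x y a b :: "'a::real_inner" and t \<beta> s :: real
  assumes h1: "\<beta>*(4*t+1) = 2*t" and h2: "s*(4*t+1) = t"
  shows "EE (x - a) * EE (y - b) * exp (-t * (norm (x - y))^2) =
    exp (-s * (norm (a - b))^2) * (EE (x - (a - \<beta> *\<^sub>R (a - b))) * EE (y - (b + \<beta> *\<^sub>R (a - b)))
      * exp (-t * (norm ((x - (a - \<beta> *\<^sub>R (a - b))) - (y - (b + \<beta> *\<^sub>R (a - b)))))^2))"
proof -
  have e: "(1/2)*(norm (x-a))^2 + (1/2)*(norm (y-b))^2 + t*(norm ((x-a) - (y-b) + (a-b)))^2 =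
     s*(norm (a-b))^2 + (1/2)*(norm ((x-a) + \<beta> *\<^sub>R (a-b)))^2 + (1/2)*(norm ((y-b) - \<beta> *\<^sub>R (a-b)))^2
     + t*(norm ((x-a) + \<beta> *\<^sub>R (a-b) - ((y-b) - \<beta> *\<^sub>R (a-b))))^2"
    by (rule expo_id[OF h1 h2])
  have e2: "(x-a) - (y-b) + (a-b) = x - y" "(x-a) + \<beta> *\<^sub>R (a-b) = x - (a - \<beta> *\<^sub>R (a - b))"
     "(y-b) - \<beta> *\<^sub>R (a-b) = y - (b + \<beta> *\<^sub>R (a - b))" by (simp_all add: algebra_simps)
  have L: "EE (x-a)*EE(y-b)*exp(-t*(norm (x-y))^2) = exp (-((1/2)*(norm (x-a))^2 + (1/2)*(norm (y-b))^2 + t*(norm ((x-a) - (y-b) + (a-b)))^2))"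
    unfolding e2 EE_def by (simp add: mult_exp_exp algebra_simps)
  have R: "exp (-s * (norm (a - b))^2) * (EE (x - (a - \<beta> *\<^sub>R (a - b))) * EE (y - (b + \<beta> *\<^sub>R (a - b)))
      * exp (-t * (norm ((x - (a - \<beta> *\<^sub>R (a - b))) - (y - (b + \<beta> *\<^sub>R (a - b)))))^2))
    = exp (-(s*(norm (a-b))^2 + (1/2)*(norm ((x-a) + \<beta> *\<^sub>R (a-b)))^2 + (1/2)*(norm ((y-b) - \<beta> *\<^sub>R (a-b)))^2
     + t*(norm ((x-a) + \<beta> *\<^sub>R (a-b) - ((y-b) - \<beta> *\<^sub>R (a-b))))^2))"
    unfolding e2 EE_def by (simp add: mult_exp_exp algebra_simps)
  show ?thesis unfolding L R e ..
qed

lemma translate_lborel: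
  fixes F :: "'b::euclidean_space \<Rightarrow> ennreal"
  assumes [measurable]: "F \<in> borel_measurable borel"
  shows "(\<integral>\<^sup>+z. F (z - c) \<partial>lborel) = (\<integral>\<^sup>+z. F z \<partial>lborel)"
proof -
  have "(\<integral>\<^sup>+z. F z \<partial>lborel) = (\<integral>\<^sup>+z. F z \<partial>distr lborel borel ((+) (-c)))"
    by (simp add: lborel_distr_plus)
  also have "\<dots> = (\<integral>\<^sup>+z. F (-c + z) \<partial>lborel)"
    by (subst nn_integral_distr) auto
  finally show ?thesis by simp
qed

lemma term_integral:
  fixes a b :: "'a::euclidean_space" and t \<beta> s :: real
  assumes h1: "\<beta>*(4*t+1) = 2*t" and h2: "s*(4*t+1) = t"
  shows "(\<integral>\<^sup>+z. ennreal (EE (fst z - a) * EE (snd z - b) * exp (-t * (norm (fst z - snd z))^2)) \<partial>(lborel :: ('a \<times> 'a) measure))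
    = ennreal (exp (-s * (norm (a - b))^2)) *
      (\<integral>\<^sup>+z. ennreal (EE (fst z) * EE (snd z) * exp (-t * (norm (fst z - snd z))^2)) \<partial>(lborel :: ('a \<times> 'a) measure))"
proof -
  define G where "G = (\<lambda>z::'a\<times>'a. ennreal (EE (fst z) * EE (snd z) * exp (-t * (norm (fst z - snd z))^2)))"
  have "(\<lambda>z::'a\<times>'a. EE (fst z) * EE (snd z) * exp (-t * (norm (fst z - snd z))^2)) \<in> borel_measurable borel"
    unfolding EE_def by (intro borel_measurable_continuous_onI continuous_intros)
  then have Gm[measurable]: "G \<in> borel_measurable borel" unfolding G_def by measurable
  define c where "c = ((a - \<beta> *\<^sub>R (a - b)), (b + \<beta> *\<^sub>R (a - b)))"
  have "\<And>z. ennreal (EE (fst z - a) * EE (snd z - b) * exp (-t * (norm (fst z - snd z))^2))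
      = ennreal (exp (-s * (norm (a - b))^2)) * G (z - c)"
    unfolding G_def c_def
    by (subst pointwise[OF h1 h2]) (simp add: ennreal_mult' EE_pos less_imp_le)
  then have "(\<integral>\<^sup>+z. ennreal (EE (fst z - a) * EE (snd z - b) * exp (-t * (norm (fst z - snd z))^2)) \<partial>(lborel :: ('a \<times> 'a) measure))
     = (\<integral>\<^sup>+z. ennreal (exp (-s * (norm (a - b))^2)) * G (z - c) \<partial>lborel)" by simp
  also have "\<dots> = ennreal (exp (-s * (norm (a - b))^2)) * (\<integral>\<^sup>+z. G (z - c) \<partial>lborel)"
    by (rule nn_integral_cmult) measurable
  also have "(\<integral>\<^sup>+z. G (z - c) \<partial>lborel) = (\<integral>\<^sup>+z. G z \<partial>lborel)"
    by (rule translate_lborel) measurable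
  finally show ?thesis unfolding G_def .
qed

lemma gauss1_finite: "(\<integral>\<^sup>+u. ennreal (exp (-(1/2) * u^2)) \<partial>(lborel::real measure)) < \<infinity>"
proof -
  have "integrable lborel (\<lambda>u. sqrt (2*pi) * normal_density 0 1 u)" by simp
  moreover have "\<And>u. sqrt (2*pi) * normal_density 0 1 u = exp (-(1/2) * u^2)"
    by (simp add: normal_density_def)
  ultimately have "integrable lborel (\<lambda>u::real. exp (-(1/2) * u^2))" by simp
  from integrableD(2)[OF this] show ?thesis by (simp add: less_top)
qed

lemma EE_prod: "EE (x::'a::euclidean_space) = (\<Prod>b\<in>Basis. exp (-(1/2) * (x \<bullet> b)^2))"
  unfolding EE_def power2_norm_eq_inner
  by (subst euclidean_inner) (simp add: exp_sum sum_distrib_left power2_eq_square)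

lemma EE_int_finite: "(\<integral>\<^sup>+x. ennreal (EE x) \<partial>(lborel::'a::euclidean_space measure)) < \<infinity>"
proof -
  have "(\<integral>\<^sup>+x. ennreal (EE x) \<partial>(lborel::'a measure)) =
      (\<integral>\<^sup>+x. (\<Prod>b\<in>Basis. ennreal (exp (-(1/2) * ((x::'a) \<bullet> b)^2))) \<partial>lborel)"
    by (rule nn_integral_cong) (simp add: EE_prod prod_ennreal)
  also have "\<dots> = (\<Prod>b\<in>(Basis::'a set). (\<integral>\<^sup>+u. ennreal (exp (-(1/2) * u^2)) \<partial>lborel))"
    by (rule nn_integral_lborel_prod) auto
  also have "\<dots> < \<infinity>"
    using gauss1_finite by (simp add: ennreal_prod_eq_top less_top[symmetric] power_eq_top_ennreal)
  finally show ?thesis .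
qed

lemma K_finite:
  "(\<integral>\<^sup>+z. ennreal (EE (fst z) * EE (snd z) * exp (-t * (norm (fst z - snd z))^2)) \<partial>(lborel :: ('a::euclidean_space \<times> 'a) measure)) < \<infinity>"
  (is "?K < _")
  if "t \<ge> 0"
proof -
  have "?K \<le> (\<integral>\<^sup>+z. ennreal (EE (fst z)) * ennreal (EE (snd z)) \<partial>(lborel :: ('a \<times> 'a) measure))"
    using that by (intro nn_integral_mono)
      (auto simp: ennreal_mult'[symmetric] EE_pos less_imp_le intro!: ennreal_leI mult_left_le mult_nonneg_nonneg)
  also have "\<dots> = (\<integral>\<^sup>+z. ennreal (EE (fst z)) * ennreal (EE (snd z)) \<partial>(lborel \<Otimes>\<^sub>M lborel :: ('a \<times> 'a) measure))"
    by (simp add: lborel_prod)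
  also have "\<dots> = (\<integral>\<^sup>+x. \<integral>\<^sup>+y. ennreal (EE (x::'a)) * ennreal (EE (y::'a)) \<partial>lborel \<partial>lborel)"
    using lborel.nn_integral_fst[of "\<lambda>z. ennreal (EE (fst z)) * ennreal (EE (snd z))" "lborel::'a measure", symmetric] by simp
  also have "\<dots> = (\<integral>\<^sup>+x. ennreal (EE (x::'a)) * (\<integral>\<^sup>+y. ennreal (EE (y::'a)) \<partial>lborel) \<partial>lborel)"
    by (simp add: nn_integral_cmult)
  also have "\<dots> = (\<integral>\<^sup>+x. ennreal (EE (x::'a)) \<partial>lborel) * (\<integral>\<^sup>+y. ennreal (EE y) \<partial>(lborel::'a measure))"
    by (simp add: nn_integral_multc)
  also have "\<dots> < \<infinity>" using EE_int_finite[where 'a='a] by (simp add: ennreal_mult_less_top)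
  finally show ?thesis .
qed

lemma K_pos:
  "(\<integral>\<^sup>+z. ennreal (EE (fst z) * EE (snd z) * exp (-t * (norm (fst z - snd z))^2)) \<partial>(lborel :: ('a::euclidean_space \<times> 'a) measure)) \<noteq> 0"
proof -
  have m: "(\<lambda>z::'a\<times>'a. EE (fst z) * EE (snd z) * exp (-t * (norm (fst z - snd z))^2)) \<in> borel_measurable borel"
    unfolding EE_def by (intro borel_measurable_continuous_onI continuous_intros)
  have "{x \<in> space lborel. ennreal (EE (fst x) * EE (snd x) * exp (-t * (norm (fst x - snd x))^2)) \<noteq> 0} = (UNIV :: ('a\<times>'a) set)"
    using EE_pos by (auto simp: ennreal_eq_0_iff not_le intro!: mult_pos_pos)
  then show ?thesis
    by (subst nn_integral_0_iff) (use m in \<open>simp_all add: emeasure_lborel_UNIV\<close>)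
qed

lemma gm_eq: "gauss_mix k w m x = (\<Sum>i<k. (w i * (1 / sqrt ((2 * pi) ^ DIM('a)))) * EE (x - (m i :: 'a::euclidean_space)))"
  unfolding gauss_mix_def EE_def by simp

lemma gm_measurable[measurable]: "gauss_mix k w m \<in> borel_measurable borel"
  unfolding gauss_mix_def by measurable

lemma dist_int:
  fixes m :: "nat \<Rightarrow> 'a::euclidean_space" and t \<beta> s :: real
  assumes h1: "\<beta>*(4*t+1) = 2*t" and h2: "s*(4*t+1) = t"
    and w: "\<forall>i<k. w i \<ge> 0"
  shows "(\<integral>\<^sup>+u. ennreal (exp (-t*u)) \<partial>dist_distr (gauss_mix k w m)) =
    ennreal ((1 / sqrt ((2 * pi) ^ DIM('a)))^2 * (\<Sum>i<k. \<Sum>j<k. w i * w j * exp (-s * (norm (m i - m j))^2))) *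
    (\<integral>\<^sup>+z. ennreal (EE (fst z) * EE (snd z) * exp (-t * (norm (fst z - snd z))^2)) \<partial>(lborel :: ('a \<times> 'a) measure))"
proof -
  define C where "C = 1 / sqrt ((2 * pi) ^ DIM('a))"
  have C0: "C \<ge> 0" unfolding C_def by simp
  define \<rho> where "\<rho> = gauss_mix k w m"
  have \<rho>m[measurable]: "\<rho> \<in> borel_measurable borel" unfolding \<rho>_def by measurable
  have \<rho>nn: "\<rho> x \<ge> 0" for x unfolding \<rho>_def gm_eq C_def[symmetric] using w C0
    by (intro sum_nonneg mult_nonneg_nonneg) (auto simp: EE_pos less_imp_le)
  define D where "D = density lborel (\<lambda>x. ennreal (\<rho> x))"
  have sfD: "sigma_finite_measure D"
    unfolding D_def by (subst sigma_finite_measure.sigma_finite_iff_density_finite[OF sigma_finite_lborel]) auto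
  have "(\<integral>\<^sup>+u. ennreal (exp (-t*u)) \<partial>dist_distr (gauss_mix k w m)) =
     (\<integral>\<^sup>+z. ennreal (exp (-t * (case z of (x,y) \<Rightarrow> (norm (x - y))\<^sup>2))) \<partial>(D \<Otimes>\<^sub>M D))"
    unfolding dist_distr_def \<rho>_def[symmetric] D_def[symmetric]
    by (subst nn_integral_distr) (auto simp: D_def)
  also have "D \<Otimes>\<^sub>M D = density (lborel \<Otimes>\<^sub>M lborel) (\<lambda>(x,y). ennreal (\<rho> x) * ennreal (\<rho> y))"
    unfolding D_def by (rule pair_measure_density) (auto simp: sfD[unfolded D_def] intro: lborel.sigma_finite_measure_axioms)
  also have "lborel \<Otimes>\<^sub>M lborel = (lborel :: ('a \<times> 'a) measure)" by (rule lborel_prod)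
  also have "(\<integral>\<^sup>+z. ennreal (exp (-t * (case z of (x,y) \<Rightarrow> (norm (x - y))\<^sup>2))) \<partial>density lborel (\<lambda>(x,y). ennreal (\<rho> x) * ennreal (\<rho> y)))
     = (\<integral>\<^sup>+z. (\<Sum>i<k. \<Sum>j<k. ennreal ((w i * C) * (w j * C)) *
          ennreal (EE (fst z - m i) * EE (snd z - m j) * exp (-t * (norm (fst z - snd z))^2))) \<partial>lborel)"
  proof -
    have hm: "(\<lambda>z::'a\<times>'a. \<rho> (fst z) * \<rho> (snd z)) \<in> borel_measurable borel"
      unfolding \<rho>_def gauss_mix_def by (intro borel_measurable_continuous_onI continuous_intros)
    have hm2: "(\<lambda>z::'a\<times>'a. exp (-t * (case z of (x,y) \<Rightarrow> (norm (x - y))\<^sup>2))) \<in> borel_measurable borel"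
      by (simp add: case_prod_beta, intro borel_measurable_continuous_onI continuous_intros)
    have fe: "(\<lambda>(x,y). ennreal (\<rho> x) * ennreal (\<rho> y)) = (\<lambda>z::'a\<times>'a. ennreal (\<rho> (fst z) * \<rho> (snd z)))"
      using \<rho>nn by (auto simp: ennreal_mult')
    have "(\<integral>\<^sup>+z. ennreal (exp (-t * (case z of (x,y) \<Rightarrow> (norm (x - y))\<^sup>2))) \<partial>density lborel (\<lambda>(x,y). ennreal (\<rho> x) * ennreal (\<rho> y)))
      = (\<integral>\<^sup>+z. ennreal (\<rho> (fst z) * \<rho> (snd z)) * ennreal (exp (-t * (case z of (x,y) \<Rightarrow> (norm (x - y))\<^sup>2))) \<partial>lborel)"
    proof -
      have hmE: "(\<lambda>z::'a\<times>'a. ennreal (\<rho> (fst z) * \<rho> (snd z))) \<in> borel_measurable lborel"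
        using measurable_compose[OF hm measurable_ennreal] by simp
      have hm2E: "(\<lambda>z::'a\<times>'a. ennreal (exp (-t * (case z of (x,y) \<Rightarrow> (norm (x - y))\<^sup>2)))) \<in> borel_measurable lborel"
        using measurable_compose[OF hm2 measurable_ennreal] by simp
      show ?thesis unfolding fe by (rule nn_integral_density[OF hmE hm2E])
    qed
    also have "\<dots> = (\<integral>\<^sup>+z. (\<Sum>i<k. \<Sum>j<k. ennreal ((w i * C) * (w j * C)) *
          ennreal (EE (fst z - m i) * EE (snd z - m j) * exp (-t * (norm (fst z - snd z))^2))) \<partial>lborel)"
    proof (rule nn_integral_cong)
    fix z :: "'a \<times> 'a"
    obtain x y where z: "z = (x,y)" by (cases z)
    have "ennreal (\<rho> x * \<rho> y) * ennreal (exp (-t * (norm (x - y))\<^sup>2)) =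
        ennreal (\<rho> x * \<rho> y * exp (-t * (norm (x - y))\<^sup>2))"
      using \<rho>nn by (simp add: ennreal_mult')
    also have "\<rho> x * \<rho> y * exp (-t * (norm (x - y))\<^sup>2) =
      (\<Sum>i<k. \<Sum>j<k. ((w i * C) * (w j * C)) * (EE (x - m i) * EE (y - m j) * exp (-t * (norm (x - y))^2)))"
      unfolding \<rho>_def gm_eq C_def[symmetric]
      by (simp add: sum_distrib_left sum_distrib_right mult_ac) (subst sum.swap, simp add: mult_ac)
    also have "ennreal \<dots> = (\<Sum>i<k. \<Sum>j<k. ennreal ((w i * C) * (w j * C)) *
          ennreal (EE (x - m i) * EE (y - m j) * exp (-t * (norm (x - y))^2)))"
    proof -
      have nn: "0 \<le> (w i * C) * (w j * C) * (EE (x - m i) * EE (y - m j) * exp (-t * (norm (x - y))^2))"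
        if "i < k" "j < k" for i j
        using w C0 EE_pos that by (intro mult_nonneg_nonneg) (auto simp: less_imp_le)
      have "ennreal (\<Sum>i<k. \<Sum>j<k. ((w i * C) * (w j * C)) * (EE (x - m i) * EE (y - m j) * exp (-t * (norm (x - y))^2)))
        = (\<Sum>i<k. ennreal (\<Sum>j<k. ((w i * C) * (w j * C)) * (EE (x - m i) * EE (y - m j) * exp (-t * (norm (x - y))^2))))"
        by (rule sum_ennreal[symmetric]) (use nn in \<open>auto intro!: sum_nonneg\<close>)
      also have "\<dots> = (\<Sum>i<k. \<Sum>j<k. ennreal (((w i * C) * (w j * C)) * (EE (x - m i) * EE (y - m j) * exp (-t * (norm (x - y))^2))))"
        by (intro sum.cong refl sum_ennreal[symmetric]) (use nn in auto)
      also have "\<dots> = (\<Sum>i<k. \<Sum>j<k. ennreal ((w i * C) * (w j * C)) *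
          ennreal (EE (x - m i) * EE (y - m j) * exp (-t * (norm (x - y))^2)))"
        using w C0 EE_pos by (intro sum.cong refl) (auto intro!: ennreal_mult mult_nonneg_nonneg simp: less_imp_le)
      finally show ?thesis .
    qed
    finally show "ennreal (\<rho> (fst z) * \<rho> (snd z)) * ennreal (exp (- t * (case z of (x, y) \<Rightarrow> (norm (x - y))\<^sup>2))) =
         (\<Sum>i<k. \<Sum>j<k. ennreal ((w i * C) * (w j * C)) *
          ennreal (EE (fst z - m i) * EE (snd z - m j) * exp (-t * (norm (fst z - snd z))^2)))"
      by (simp add: z)
    qed
    finally show ?thesis .
  qed
  also have "\<dots> = (\<Sum>i<k. \<Sum>j<k. ennreal ((w i * C) * (w j * C)) *
          (\<integral>\<^sup>+z. ennreal (EE (fst z - m i) * EE (snd z - m j) * exp (-t * (norm (fst z - snd z))^2)) \<partial>lborel))"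
  proof -
    have mm: "(\<lambda>z::'a\<times>'a. EE (fst z - a) * EE (snd z - b) * exp (-t * (norm (fst z - snd z))^2)) \<in> borel_measurable borel" for a b
      unfolding EE_def by (intro borel_measurable_continuous_onI continuous_intros)
    show ?thesis
      by (subst nn_integral_sum, use mm in measurable)
         (intro sum.cong refl, subst nn_integral_sum, use mm in measurable,
          intro sum.cong refl, rule nn_integral_cmult, use mm in measurable)
  qed
  also have "\<dots> = (\<Sum>i<k. \<Sum>j<k. ennreal ((w i * C) * (w j * C)) *
          (ennreal (exp (-s * (norm (m i - m j))^2)) *
      (\<integral>\<^sup>+z. ennreal (EE (fst z) * EE (snd z) * exp (-t * (norm (fst z - snd z))^2)) \<partial>(lborel :: ('a \<times> 'a) measure))))"
    by (intro sum.cong refl) (subst term_integral[OF h1 h2], rule refl)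
  also have "\<dots> = ennreal (C^2 * (\<Sum>i<k. \<Sum>j<k. w i * w j * exp (-s * (norm (m i - m j))^2))) *
    (\<integral>\<^sup>+z. ennreal (EE (fst z) * EE (snd z) * exp (-t * (norm (fst z - snd z))^2)) \<partial>(lborel :: ('a \<times> 'a) measure))"
  proof -
    have "(\<Sum>i<k. \<Sum>j<k. ennreal ((w i * C) * (w j * C)) * ennreal (exp (-s * (norm (m i - m j))^2)))
      = ennreal (C^2 * (\<Sum>i<k. \<Sum>j<k. w i * w j * exp (-s * (norm (m i - m j))^2)))"
      using w C0
      apply (simp add: sum_distrib_left)
      apply (subst sum_ennreal[symmetric], force intro!: sum_nonneg mult_nonneg_nonneg)
      apply (intro sum.cong refl)
      apply (subst sum_ennreal[symmetric], force intro!: sum_nonneg mult_nonneg_nonneg)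
      apply (intro sum.cong refl)
      apply (simp add: ennreal_mult'[symmetric] power2_eq_square mult_ac)
      done
    moreover have "(\<Sum>i<k. \<Sum>j<k. ennreal ((w i * C) * (w j * C)) *
          (ennreal (exp (-s * (norm (m i - m j))^2)) * KK)) =
       (\<Sum>i<k. \<Sum>j<k. ennreal ((w i * C) * (w j * C)) * ennreal (exp (-s * (norm (m i - m j))^2))) * KK" for KK
      by (simp only: sum_distrib_right mult.assoc)
    ultimately show ?thesis by simp
  qed
  finally show ?thesis unfolding C_def .
qed


lemma exp_indep:
  fixes A :: "real set" and a b :: real
  assumes "finite A" "a < b"
  shows "(\<forall>s\<in>{a<..<b}. (\<Sum>x\<in>A. d x * exp (-(s*x))) = 0) \<Longrightarrow> \<forall>x\<in>A. d x = 0"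
  using assms(1)
proof (induction A arbitrary: d rule: finite_induct)
  case empty then show ?case by simp
next
  case (insert x0 A)
  let ?F = "\<lambda>s. (\<Sum>x\<in>insert x0 A. d x * exp (-(s*x)))"
  have D0: "(\<Sum>x\<in>insert x0 A. d x * (exp (-(s*x)) * (-x))) = 0" if s: "s \<in> {a<..<b}" for s
  proof -
    have d1: "(?F has_field_derivative (\<Sum>x\<in>insert x0 A. d x * (exp (-(s*x)) * (-x)))) (at s)"
      by (auto intro!: derivative_eq_intros sum.cong simp: mult_ac)
    have d2: "(?F has_field_derivative 0) (at s)"
      by (rule has_field_derivative_transform_within_open[of "\<lambda>_. 0" 0 s "{a<..<b}"])
         (use s insert.prems in auto)
    show ?thesis using DERIV_unique[OF d1 d2] .
  qed
  have "\<forall>s\<in>{a<..<b}. (\<Sum>x\<in>A. (d x * (x0 - x)) * exp (-(s*x))) = 0"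
  proof
    fix s assume s: "s \<in> {a<..<b}"
    have "(\<Sum>x\<in>A. (d x * (x0 - x)) * exp (-(s*x))) =
        (\<Sum>x\<in>insert x0 A. (d x * (x0 - x)) * exp (-(s*x)))"
      using insert.hyps by simp
    also have "\<dots> = x0 * ?F s + (\<Sum>x\<in>insert x0 A. d x * (exp (-(s*x)) * (-x)))"
      by (simp add: sum_distrib_left sum.distrib[symmetric] algebra_simps)
    also have "\<dots> = 0" using D0[OF s] insert.prems s by simp
    finally show "(\<Sum>x\<in>A. (d x * (x0 - x)) * exp (-(s*x))) = 0" .
  qed
  from insert.IH[OF this] have dA: "\<forall>x\<in>A. d x = 0"
    using insert.hyps by auto
  obtain s where s: "s \<in> {a<..<b}" using \<open>a < b\<close> dense by auto
  have "?F s = d x0 * exp (-(s*x0))" using dA insert.hyps by simp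
  then have "d x0 = 0" using insert.prems s by auto
  then show ?case using dA by auto
qed


definition cf :: "nat \<Rightarrow> (nat \<Rightarrow> 'a::euclidean_space) \<Rightarrow> (nat \<Rightarrow> real) \<Rightarrow> real \<Rightarrow> real" where
  "cf k m w a = (\<Sum>p\<in>{p\<in>{..<k}\<times>{..<k}. (dist (m (fst p)) (m (snd p)))\<^sup>2 = a}. w (fst p) * w (snd p))"

definition uniq :: "nat \<Rightarrow> (nat \<Rightarrow> 'a::euclidean_space) \<Rightarrow> bool" where
  "uniq k m \<longleftrightarrow> (\<forall>i<k. \<forall>j<k. \<forall>i'<k. \<forall>j'<k. i \<noteq> j \<longrightarrow> dist (m i') (m j') = dist (m i) (m j) \<longrightarrow>
      (i' = i \<and> j' = j) \<or> (i' = j \<and> j' = i))"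

lemma three_distinct:
  fixes k i :: nat
  assumes "k \<ge> 3" "i < k" shows "\<exists>j l. j < k \<and> l < k \<and> j \<noteq> i \<and> l \<noteq> i \<and> j \<noteq> l"
proof (cases "i = 0")
  case True then show ?thesis using assms by (intro exI[of _ 1] exI[of _ 2]) auto
next
  case False
  show ?thesis
  proof (cases "i = 1")
    case True then show ?thesis using assms by (intro exI[of _ 0] exI[of _ 2]) auto
  next
    case False
    then show ?thesis using \<open>i \<noteq> 0\<close> assms by (intro exI[of _ 0] exI[of _ 1]) auto
  qed
qed

lemma uniq_mu:
  fixes \<mu> :: "nat \<Rightarrow> 'a::euclidean_space"
  assumes k3: "k \<ge> 3" and inj: "inj_on (\<lambda>(i, j). dist (\<mu> i) (\<mu> j)) {(i, j). i < j \<and> j < k}"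
  shows "uniq k \<mu>"
proof -
  have L1: "(i' = i \<and> j' = j) \<or> (i' = j \<and> j' = i)"
    if "i < k" "j < k" "i' < k" "j' < k" "i \<noteq> j" "i' \<noteq> j'" "dist (\<mu> i') (\<mu> j') = dist (\<mu> i) (\<mu> j)" for i j i' j'
  proof -
    have a: "(min i j, max i j) \<in> {(i, j). i < j \<and> j < k}" "(min i' j', max i' j') \<in> {(i, j). i < j \<and> j < k}"
      using that by auto
    have b: "dist (\<mu> (min i j)) (\<mu> (max i j)) = dist (\<mu> i) (\<mu> j)" "dist (\<mu> (min i' j')) (\<mu> (max i' j')) = dist (\<mu> i') (\<mu> j')"
      by (auto simp: min_def max_def dist_commute)
    have "(min i' j', max i' j') = (min i j, max i j)"
      using inj_onD[OF inj _ a(2) a(1)] b that(7) by simp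
    then show ?thesis using that by (auto simp: min_def max_def split: if_splits)
  qed
  have L2: "\<mu> i \<noteq> \<mu> j" if "i < k" "j < k" "i \<noteq> j" for i j
  proof
    assume e: "\<mu> i = \<mu> j"
    obtain l where l: "l < k" "l \<noteq> i" "l \<noteq> j" using three_distinct[OF k3 \<open>i < k\<close>] that by metis
    have "dist (\<mu> j) (\<mu> l) = dist (\<mu> i) (\<mu> l)" using e by simp
    from L1[OF that(1) l(1) that(2) l(1) _ _ this] l that show False by auto
  qed
  show ?thesis unfolding uniq_def
  proof (intro allI impI)
    fix i j i' j' assume h: "i < k" "j < k" "i' < k" "j' < k" "i \<noteq> j" "dist (\<mu> i') (\<mu> j') = dist (\<mu> i) (\<mu> j)"
    have "i' \<noteq> j'"
    proof
      assume "i' = j'"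
      then have "dist (\<mu> i) (\<mu> j) = 0" using h by simp
      then show False using L2[OF h(1,2,5)] by simp
    qed
    then show "(i' = i \<and> j' = j) \<or> (i' = j \<and> j' = i)" using L1[OF h(1-5) _ h(6)] by blast
  qed
qed

lemma uniq_pos: "uniq k m \<Longrightarrow> i < k \<Longrightarrow> j < k \<Longrightarrow> i \<noteq> j \<Longrightarrow> dist (m i) (m j) > 0"
  unfolding uniq_def by (metis dist_self zero_less_dist_iff)

lemma cf_pair:
  assumes u: "uniq k m" and ij: "i < k" "j < k" "i \<noteq> j"
  shows "cf k m w ((dist (m i) (m j))\<^sup>2) = w i * w j + w j * w i"
proof -
  have "{p\<in>{..<k}\<times>{..<k}. (dist (m (fst p)) (m (snd p)))\<^sup>2 = (dist (m i) (m j))\<^sup>2} = {(i,j), (j,i)}"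
  proof (intro set_eqI iffI)
    fix p assume h: "p \<in> {p\<in>{..<k}\<times>{..<k}. (dist (m (fst p)) (m (snd p)))\<^sup>2 = (dist (m i) (m j))\<^sup>2}"
    obtain a b where p: "p = (a, b)" by (cases p)
    have "dist (m a) (m b) = dist (m i) (m j)" using h p by (simp add: power2_eq_iff_nonneg)
    moreover have "a < k" "b < k" using h p by auto
    ultimately have "(a = i \<and> b = j) \<or> (a = j \<and> b = i)" using u ij unfolding uniq_def by blast
    then show "p \<in> {(i,j), (j,i)}" using p by auto
  qed (use ij in \<open>auto simp: dist_commute\<close>)
  then show ?thesis unfolding cf_def using ij by simp
qed

lemma weights_eq:
  fixes V W :: "nat \<Rightarrow> real"
  assumes k3: "k \<ge> 3" and V: "\<forall>i<k. V i > 0" and W: "\<forall>i<k. W i > 0"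
    and e: "\<And>i j. i < k \<Longrightarrow> j < k \<Longrightarrow> i \<noteq> j \<Longrightarrow> V i * V j = W i * W j"
  shows "\<forall>i<k. V i = W i"
proof (intro allI impI)
  fix i assume i: "i < k"
  obtain j l where jl: "j < k" "l < k" "j \<noteq> i" "l \<noteq> i" "j \<noteq> l" using three_distinct[OF k3 i] by blast
  have "(V i)^2 * (V j * V l) = (V i * V j) * (V i * V l)" by (simp add: power2_eq_square mult_ac)
  also have "\<dots> = (W i * W j) * (W i * W l)" using e i jl by simp
  also have "\<dots> = (W i)^2 * (W j * W l)" by (simp add: power2_eq_square mult_ac)
  also have "W j * W l = V j * V l" using e jl by simp
  finally have ee: "(V i)^2 * (V j * V l) = (W i)^2 * (V j * V l)" .
  have "V j * V l \<noteq> 0" using V jl by auto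
  then have "(V i)^2 = (W i)^2" using ee by simp
  then show "V i = W i" using V W i by (simp add: power2_eq_iff_nonneg less_imp_le)
qed


lemma pair_dists_eq:
  fixes \<mu> \<nu> :: "nat \<Rightarrow> 'a::euclidean_space"
  assumes u: "uniq k \<mu>" and inj: "inj_on (\<lambda>(i, j). dist (\<mu> i) (\<mu> j)) {(i, j). i < j \<and> j < k}"
    and cfe: "\<forall>a. cf k \<nu> wb a = cf k \<mu> w a" and w: "\<forall>i<k. w i > 0"
  shows "pair_dists k \<nu> = pair_dists k \<mu>"
proof -
  define P where "P = {(i, j). i < j \<and> j < (k::nat)}"
  define d\<mu> where "d\<mu> = (\<lambda>(i, j). dist (\<mu> i) (\<mu> j))"
  define d\<nu> where "d\<nu> = (\<lambda>(i, j). dist (\<nu> i) (\<nu> j))"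
  have finP: "finite P" by (rule finite_subset[of _ "{..<k}\<times>{..<k}"]) (auto simp: P_def)
  have ex: "\<exists>q\<in>P. d\<nu> q = d\<mu> p" if p: "p \<in> P" for p
  proof -
    obtain i j where ij: "p = (i, j)" "i < j" "j < k" using p by (auto simp: P_def)
    have "cf k \<mu> w ((dist (\<mu> i) (\<mu> j))\<^sup>2) = w i * w j + w j * w i"
      using cf_pair[OF u, of i j w] ij by simp
    also have "\<dots> > 0" using w ij by simp
    finally have "cf k \<nu> wb ((dist (\<mu> i) (\<mu> j))\<^sup>2) \<noteq> 0" using cfe by simp
    then have "{p\<in>{..<k}\<times>{..<k}. (dist (\<nu> (fst p)) (\<nu> (snd p)))\<^sup>2 = (dist (\<mu> i) (\<mu> j))\<^sup>2} \<noteq> {}"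
      unfolding cf_def by (metis sum.empty)
    then obtain a b where ab: "a < k" "b < k" "(dist (\<nu> a) (\<nu> b))\<^sup>2 = (dist (\<mu> i) (\<mu> j))\<^sup>2" by auto
    then have dab: "dist (\<nu> a) (\<nu> b) = dist (\<mu> i) (\<mu> j)" by (simp add: power2_eq_iff_nonneg)
    have "dist (\<mu> i) (\<mu> j) > 0" using uniq_pos[OF u, of i j] ij by simp
    then have "a \<noteq> b" using dab by auto
    then have "(min a b, max a b) \<in> P" using ab by (auto simp: P_def)
    moreover have "d\<nu> (min a b, max a b) = d\<mu> p"
      using dab ij by (auto simp: d\<nu>_def d\<mu>_def min_def max_def dist_commute)
    ultimately show ?thesis by blast
  qed
  then obtain \<tau> where \<tau>: "\<And>p. p \<in> P \<Longrightarrow> \<tau> p \<in> P \<and> d\<nu> (\<tau> p) = d\<mu> p" by metis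
  have inj\<tau>: "inj_on \<tau> P"
  proof (rule inj_onI)
    fix p q assume "p \<in> P" "q \<in> P" "\<tau> p = \<tau> q"
    then have "d\<mu> p = d\<mu> q" using \<tau> by metis
    then show "p = q" using inj_onD[OF inj] \<open>p \<in> P\<close> \<open>q \<in> P\<close> unfolding P_def d\<mu>_def by blast
  qed
  have sub: "\<tau> ` P \<subseteq> P" using \<tau> by auto
  have img: "\<tau> ` P = P"
    using card_subset_eq[OF finP sub] card_image[OF inj\<tau>] by simp
  have "pair_dists k \<nu> = image_mset d\<nu> (mset_set P)" unfolding pair_dists_def P_def d\<nu>_def by simp
  also have "mset_set P = image_mset \<tau> (mset_set P)"
    using image_mset_mset_set[OF inj\<tau>] img by simp
  also have "image_mset d\<nu> (image_mset \<tau> (mset_set P)) = image_mset (\<lambda>p. d\<nu> (\<tau> p)) (mset_set P)"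
    by (simp add: multiset.map_comp comp_def)
  also have "\<dots> = image_mset d\<mu> (mset_set P)"
    by (rule image_mset_cong) (use \<tau> finP in auto)
  also have "\<dots> = pair_dists k \<mu>" unfolding pair_dists_def P_def d\<mu>_def by simp
  finally show ?thesis .
qed


lemma final_comb:
  fixes \<mu> \<nu> :: "nat \<Rightarrow> 'a::euclidean_space"
  assumes k3: "k \<ge> 3" and w: "\<forall>i<k. w i > 0" and wb: "\<forall>i<k. wb i > 0"
    and inj: "inj_on (\<lambda>(i, j). dist (\<mu> i) (\<mu> j)) {(i, j). i < j \<and> j < k}"
    and rec: "reconstructible k \<mu>"
    and cfe: "\<forall>a. cf k \<nu> wb a = cf k \<mu> w a"
  shows "\<exists>g. rigid_motion g \<and> (\<forall>x. gauss_mix k w \<mu> x = gauss_mix k wb \<nu> (g x))"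
proof -
  have u: "uniq k \<mu>" by (rule uniq_mu[OF k3 inj])
  have pd: "pair_dists k \<nu> = pair_dists k \<mu>" by (rule pair_dists_eq[OF u inj cfe w])
  obtain g \<sigma> where g: "rigid_motion g" and \<sigma>: "bij_betw \<sigma> {..<k} {..<k}" and g\<sigma>: "\<forall>i<k. g (\<mu> (\<sigma> i)) = \<nu> i"
    using rec pd unfolding reconstructible_def by blast
  obtain f b where f: "orthogonal_transformation f" and gfb: "\<forall>x. g x = f x + b"
    using g unfolding rigid_motion_def by blast
  have gd: "dist (g x) (g y) = dist x y" for x y
  proof -
    have "g x - g y = f (x - y)" using gfb f unfolding orthogonal_transformation_def
      by (simp add: linear_diff)
    then show ?thesis using f by (simp add: dist_norm orthogonal_transformation_norm)
  qed
  have \<sigma>k: "\<sigma> i < k" if "i < k" for i using bij_betw_apply[OF \<sigma>] that by auto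
  have \<sigma>inj: "\<sigma> i = \<sigma> j \<Longrightarrow> i < k \<Longrightarrow> j < k \<Longrightarrow> i = j" for i j
    using bij_betw_imp_inj_on[OF \<sigma>] by (auto dest: inj_onD)
  have \<nu>d: "dist (\<nu> i) (\<nu> j) = dist (\<mu> (\<sigma> i)) (\<mu> (\<sigma> j))" if "i < k" "j < k" for i j
    using g\<sigma> that gd by metis
  have u\<nu>: "uniq k \<nu>" unfolding uniq_def
  proof (intro allI impI)
    fix i j i' j' assume h: "i < k" "j < k" "i' < k" "j' < k" "i \<noteq> j" "dist (\<nu> i') (\<nu> j') = dist (\<nu> i) (\<nu> j)"
    have "dist (\<mu> (\<sigma> i')) (\<mu> (\<sigma> j')) = dist (\<mu> (\<sigma> i)) (\<mu> (\<sigma> j))" using h \<nu>d by simp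
    moreover have "\<sigma> i \<noteq> \<sigma> j" using \<sigma>inj h by blast
    ultimately have "(\<sigma> i' = \<sigma> i \<and> \<sigma> j' = \<sigma> j) \<or> (\<sigma> i' = \<sigma> j \<and> \<sigma> j' = \<sigma> i)"
      using u h \<sigma>k unfolding uniq_def by blast
    then show "(i' = i \<and> j' = j) \<or> (i' = j \<and> j' = i)" using \<sigma>inj h by blast
  qed
  have we: "\<forall>i<k. wb i = w (\<sigma> i)"
  proof (rule weights_eq[OF k3 wb])
    show "\<forall>i<k. w (\<sigma> i) > 0" using w \<sigma>k by auto
    fix i j assume h: "i < k" "j < k" "i \<noteq> j"
    have "wb i * wb j + wb j * wb i = cf k \<nu> wb ((dist (\<nu> i) (\<nu> j))\<^sup>2)"
      using cf_pair[OF u\<nu> h] by simp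
    also have "\<dots> = cf k \<mu> w ((dist (\<mu> (\<sigma> i)) (\<mu> (\<sigma> j)))\<^sup>2)" using cfe \<nu>d h by simp
    also have "\<dots> = w (\<sigma> i) * w (\<sigma> j) + w (\<sigma> j) * w (\<sigma> i)"
      using cf_pair[OF u] h \<sigma>k \<sigma>inj by blast
    finally show "wb i * wb j = w (\<sigma> i) * w (\<sigma> j)" by (simp add: mult_ac)
  qed
  have "gauss_mix k wb \<nu> (g x) = gauss_mix k w \<mu> x" for x
  proof -
    have "gauss_mix k wb \<nu> (g x) = (\<Sum>i<k. w (\<sigma> i) / sqrt ((2 * pi) ^ DIM('a)) * exp (- (1/2) * (norm (x - \<mu> (\<sigma> i)))\<^sup>2))"
      unfolding gauss_mix_def
    proof (rule sum.cong[OF refl])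
      fix i assume "i \<in> {..<k}"
      then have i: "i < k" by simp
      have "norm (g x - \<nu> i) = norm (x - \<mu> (\<sigma> i))"
        using gd[of x "\<mu> (\<sigma> i)"] g\<sigma> i by (simp add: dist_norm)
      then show "wb i / sqrt ((2 * pi) ^ DIM('a)) * exp (- (1/2) * (norm (g x - \<nu> i))\<^sup>2) =
          w (\<sigma> i) / sqrt ((2 * pi) ^ DIM('a)) * exp (- (1/2) * (norm (x - \<mu> (\<sigma> i)))\<^sup>2)"
        using we i by simp
    qed
    also have "\<dots> = gauss_mix k w \<mu> x"
      unfolding gauss_mix_def
      by (rule sum.reindex_bij_betw[OF \<sigma>, of "\<lambda>j. w j / sqrt ((2 * pi) ^ DIM('a)) * exp (- (1/2) * (norm (x - \<mu> j))\<^sup>2)"])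
    finally show ?thesis .
  qed
  then show ?thesis using g by metis
qed


lemma S_group:
  fixes m :: "nat \<Rightarrow> 'a::euclidean_space"
  assumes "finite A" "(\<lambda>p. (dist (m (fst p)) (m (snd p)))\<^sup>2) ` ({..<k}\<times>{..<k}) \<subseteq> A"
  shows "(\<Sum>i<k. \<Sum>j<k. w i * w j * exp (-s * (norm (m i - m j))^2)) = (\<Sum>a\<in>A. cf k m w a * exp (-(s*a)))"
proof -
  have "(\<Sum>i<k. \<Sum>j<k. w i * w j * exp (-s * (norm (m i - m j))^2)) =
      (\<Sum>p\<in>{..<k}\<times>{..<k}. w (fst p) * w (snd p) * exp (-(s * (dist (m (fst p)) (m (snd p)))\<^sup>2)))"
    by (simp add: sum.cartesian_product dist_norm case_prod_beta)
  also have "\<dots> = (\<Sum>a\<in>A. \<Sum>p\<in>{p\<in>{..<k}\<times>{..<k}. (dist (m (fst p)) (m (snd p)))\<^sup>2 = a}. w (fst p) * w (snd p) * exp (-(s * (dist (m (fst p)) (m (snd p)))\<^sup>2)))"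
    by (rule sum.group[symmetric]) (use assms in auto)
  also have "\<dots> = (\<Sum>a\<in>A. cf k m w a * exp (-(s*a)))"
    unfolding cf_def sum_distrib_right by (intro sum.cong refl) auto
  finally show ?thesis .
qed

lemma ennreal_cancel_K:
  fixes a b :: real and K :: ennreal
  assumes "a \<ge> 0" "b \<ge> 0" "K \<noteq> 0" "K < \<infinity>" "ennreal a * K = ennreal b * K"
  shows "a = b"
proof -
  obtain r where r: "r \<ge> 0" "K = ennreal r" using assms(4) less_top_ennreal by (metis infinity_ennreal_def)
  have "r > 0" using r assms(3) by (auto simp: less_le)
  have "ennreal (a * r) = ennreal (b * r)" using assms(1,2,5) r by (simp add: ennreal_mult)
  then have "a * r = b * r" using assms(1,2) r by (simp add: ennreal_inj mult_nonneg_nonneg)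
  then show ?thesis using \<open>r > 0\<close> by simp
qed

theorem theorem4p1:
  fixes k :: nat and w wb :: "nat \<Rightarrow> real" and \<mu> \<nu> :: "nat \<Rightarrow> 'a::euclidean_space"
  assumes "k \<ge> DIM('a) + 2"
    and "\<forall>i<k. w i > 0" and "(\<Sum>i<k. w i) = 1"
    and "inj_on (\<lambda>(i, j). dist (\<mu> i) (\<mu> j)) {(i, j). i < j \<and> j < k}"
    and "reconstructible k \<mu>"
    and "\<forall>i<k. wb i > 0" and "(\<Sum>i<k. wb i) = 1"
    and "dist_distr (gauss_mix k wb \<nu>) = dist_distr (gauss_mix k w \<mu>)"
  shows "\<exists>g. rigid_motion g \<and> (\<forall>x. gauss_mix k w \<mu> x = gauss_mix k wb \<nu> (g x))"
proof -
  have k3: "k \<ge> 3" using assms(1) DIM_positive[where 'a='a] by linarith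
  define S where "S = (\<lambda>m v s. (\<Sum>i<k. \<Sum>j<k. (v i :: real) * v j * exp (-s * (norm ((m i :: 'a) - m j))^2)))"
  have Seq: "S \<nu> wb s = S \<mu> w s" if s: "s \<in> {0<..<1/4}" for s
  proof -
    define t where "t = s / (1 - 4 * s)"
    define \<beta> where "\<beta> = 2*t/(4*t+1)"
    have t0: "t > 0" using s by (simp add: t_def)
    have h1: "\<beta>*(4*t+1) = 2*t" using t0 by (simp add: \<beta>_def)
    have h2: "s*(4*t+1) = t" using s by (simp add: t_def field_simps)
    define C where "C = 1 / sqrt ((2 * pi) ^ DIM('a))"
    have C0: "C > 0" by (simp add: C_def)
    define K where "K = (\<integral>\<^sup>+z. ennreal (EE (fst z) * EE (snd z) * exp (-t * (norm (fst z - snd z))^2)) \<partial>(lborel :: ('a \<times> 'a) measure))"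
    have K0: "K \<noteq> 0" unfolding K_def by (rule K_pos)
    have Kf: "K < \<infinity>" unfolding K_def by (rule K_finite) (use t0 in simp)
    have e1: "(\<integral>\<^sup>+u. ennreal (exp (-t*u)) \<partial>dist_distr (gauss_mix k w \<mu>)) = ennreal (C^2 * S \<mu> w s) * K"
      unfolding S_def K_def C_def using dist_int[OF h1 h2, of k w \<mu>] assms(2) by (simp add: less_imp_le)
    have e2: "(\<integral>\<^sup>+u. ennreal (exp (-t*u)) \<partial>dist_distr (gauss_mix k wb \<nu>)) = ennreal (C^2 * S \<nu> wb s) * K"
      unfolding S_def K_def C_def using dist_int[OF h1 h2, of k wb \<nu>] assms(6) by (simp add: less_imp_le)
    have Snn: "S m v s \<ge> 0" if "\<forall>i<k. v i > 0" for m v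
      unfolding S_def using that by (auto intro!: sum_nonneg mult_nonneg_nonneg simp: less_imp_le)
    have "C^2 * S \<nu> wb s = C^2 * S \<mu> w s"
      by (rule ennreal_cancel_K[OF _ _ K0 Kf]) (use e1 e2 assms(8) Snn assms(2,6) C0 in auto)
    then show ?thesis using C0 by simp
  qed
  define A where "A = (\<lambda>p. (dist (\<mu> (fst p)) (\<mu> (snd p)))\<^sup>2) ` ({..<k}\<times>{..<k}) \<union> (\<lambda>p. (dist (\<nu> (fst p)) (\<nu> (snd p)))\<^sup>2) ` ({..<k}\<times>{..<k})"
  have finA: "finite A" by (simp add: A_def)
  have "\<forall>a\<in>A. cf k \<mu> w a - cf k \<nu> wb a = 0"
  proof (rule exp_indep[OF finA, of 0 "1/4"])
    show "(0::real) < 1/4" by simp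
    show "\<forall>s\<in>{0<..<1/4}. (\<Sum>a\<in>A. (cf k \<mu> w a - cf k \<nu> wb a) * exp (-(s*a))) = 0"
    proof
      fix s :: real assume s: "s \<in> {0<..<1/4}"
      have "S \<mu> w s = (\<Sum>a\<in>A. cf k \<mu> w a * exp (-(s*a)))"
        unfolding S_def by (rule S_group[OF finA]) (auto simp: A_def)
      moreover have "S \<nu> wb s = (\<Sum>a\<in>A. cf k \<nu> wb a * exp (-(s*a)))"
        unfolding S_def by (rule S_group[OF finA]) (auto simp: A_def)
      ultimately show "(\<Sum>a\<in>A. (cf k \<mu> w a - cf k \<nu> wb a) * exp (-(s*a))) = 0"
        using Seq[OF s] by (simp add: left_diff_distrib sum_subtractf)
    qed
  qed
  then have cfe: "\<forall>a. cf k \<nu> wb a = cf k \<mu> w a"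
  proof (intro allI)
    fix a assume H: "\<forall>a\<in>A. cf k \<mu> w a - cf k \<nu> wb a = 0"
    show "cf k \<nu> wb a = cf k \<mu> w a"
    proof (cases "a \<in> A")
      case True then show ?thesis using H by auto
    next
      case False
      then have E: "{p\<in>{..<k}\<times>{..<k}. (dist (\<mu> (fst p)) (\<mu> (snd p)))\<^sup>2 = a} = {}"
        "{p\<in>{..<k}\<times>{..<k}. (dist (\<nu> (fst p)) (\<nu> (snd p)))\<^sup>2 = a} = {}"
        unfolding A_def by force+
      show ?thesis unfolding cf_def by (simp only: E sum.empty)
    qed
  qed
  show ?thesis
    by (rule final_comb[OF k3 assms(2) assms(6) assms(4) assms(5) cfe])
qed

end
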